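(* Let $H$ be a bigraph and $S$ a non-trivial strong component of $H^+$. If there is an arc from a vertex of $S$ to a vertex $x\notin S$, then $\{x\}$ is a trivial strong component of $H^+$ and $x$ has out-degree $0$ in $H^+$. If there is an arc from a vertex $x\notin S$ to a vertex of $S$, then $\{x\}$ is a trivial strong component of $H^+$ and $x$ has in-degree $0$ in $H^+$. In particular, $H^+$ has no directed path between two distinct non-trivial strong components.
   Context: A bigraph is a bipartite graph $H$ with fixed bipartition $(B,W)$ (black/white colours). The pair-digraph $H^+$ has vertices all ordered pairs $(u,v)$ of distinct vertices of $H$, and arcs $(u,v)\to(u',v)$ whenever $u,v$ have the same colour, $uu'\in E(H)$, $vu'\notin E(H)$, and $(u,v)\to(u,v')$ whenever $u,v$ have different colours, $vv'\in E(H)$, $uv\notin E(H)$. A strong component is non-trivial if it has more than one vertex, trivial otherwise. *)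

theory Defs
  imports Main
begin

definition bigraph :: "'a set \<Rightarrow> 'a set \<Rightarrow> ('a \<Rightarrow> 'a \<Rightarrow> bool) \<Rightarrow> bool" where
  "bigraph B W E \<longleftrightarrow> B \<inter> W = {} \<and> finite (B \<union> W) \<and>
     (\<forall>x y. E x y \<longrightarrow> E y x) \<and>
     (\<forall>x y. E x y \<longrightarrow> (x \<in> B \<and> y \<in> W) \<or> (x \<in> W \<and> y \<in> B))"

definition same_colour :: "'a set \<Rightarrow> 'a set \<Rightarrow> 'a \<Rightarrow> 'a \<Rightarrow> bool" where
  "same_colour B W u v \<longleftrightarrow> (u \<in> B \<and> v \<in> B) \<or> (u \<in> W \<and> v \<in> W)"

definition pair_vertices :: "'a set \<Rightarrow> 'a set \<Rightarrow> ('a \<times> 'a) set" where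
  "pair_vertices B W = {(u, v). u \<in> B \<union> W \<and> v \<in> B \<union> W \<and> u \<noteq> v}"

definition pair_arc :: "'a set \<Rightarrow> 'a set \<Rightarrow> ('a \<Rightarrow> 'a \<Rightarrow> bool) \<Rightarrow> 'a \<times> 'a \<Rightarrow> 'a \<times> 'a \<Rightarrow> bool" where
  "pair_arc B W E p q \<longleftrightarrow> p \<in> pair_vertices B W \<and> q \<in> pair_vertices B W \<and>
     ((same_colour B W (fst p) (snd p) \<and> snd q = snd p \<and>
         E (fst p) (fst q) \<and> \<not> E (snd p) (fst q)) \<or>
      (\<not> same_colour B W (fst p) (snd p) \<and> fst q = fst p \<and>
         E (snd p) (snd q) \<and> \<not> E (fst p) (snd p)))"

definition pair_reach :: "'a set \<Rightarrow> 'a set \<Rightarrow> ('a \<Rightarrow> 'a \<Rightarrow> bool) \<Rightarrow> 'a \<times> 'a \<Rightarrow> 'a \<times> 'a \<Rightarrow> bool" where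
  "pair_reach B W E = (pair_arc B W E)\<^sup>*\<^sup>*"

definition pair_scc :: "'a set \<Rightarrow> 'a set \<Rightarrow> ('a \<Rightarrow> 'a \<Rightarrow> bool) \<Rightarrow> ('a \<times> 'a) set \<Rightarrow> bool" where
  "pair_scc B W E S \<longleftrightarrow> (\<exists>p \<in> pair_vertices B W.
      S = {q. pair_reach B W E p q \<and> pair_reach B W E q p})"

definition nontrivial :: "'b set \<Rightarrow> bool" where
  "nontrivial S \<longleftrightarrow> (\<exists>a b. a \<in> S \<and> b \<in> S \<and> a \<noteq> b)"

end

theory Submission
  imports Defs
begin

lemma E_props:
  assumes "bigraph B W E" "E a b"
  shows "a \<in> B \<union> W \<and> b \<in> B \<union> W \<and> \<not> same_colour B W a b \<and> a \<noteq> b \<and> E b a"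
  using assms unfolding bigraph_def same_colour_def by blast

lemma col:
  assumes "bigraph B W E" "a \<in> B \<union> W" "E b c"
  shows "same_colour B W a c \<longleftrightarrow> \<not> same_colour B W a b"
  using assms unfolding bigraph_def same_colour_def by blast

lemma sc_sym: "same_colour B W a b = same_colour B W b a"
  unfolding same_colour_def by blast

lemma arc_SC:
  assumes bg: "bigraph B W E" and a: "pair_arc B W E (u,v) q" and s: "same_colour B W u v"
  shows "\<exists>u'. q = (u',v) \<and> E u u' \<and> \<not> E v u' \<and> \<not> same_colour B W u' v \<and> u \<noteq> v
           \<and> v \<in> B \<union> W"
proof -
  have 1: "snd q = v \<and> E u (fst q) \<and> \<not> E v (fst q)" using a s unfolding pair_arc_def by auto
  have 2: "u \<noteq> v \<and> v \<in> B \<union> W" using a unfolding pair_arc_def pair_vertices_def by auto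
  have "\<not> same_colour B W v (fst q)" using col[OF bg _ ] 1 2 s sc_sym by metis
  then have 3: "\<not> same_colour B W (fst q) v" using sc_sym by metis
  show ?thesis using 1 2 3 by (cases q) auto
qed

lemma arc_DC:
  assumes bg: "bigraph B W E" and a: "pair_arc B W E (u,v) q" and s: "\<not> same_colour B W u v"
  shows "\<exists>v'. q = (u,v') \<and> E v v' \<and> \<not> E u v \<and> same_colour B W u v' \<and> v' \<noteq> u
           \<and> u \<in> B \<union> W"
proof -
  have 1: "fst q = u \<and> E v (snd q) \<and> \<not> E u v \<and> snd q \<noteq> u" using a s
    unfolding pair_arc_def pair_vertices_def by auto
  have 2: "u \<in> B \<union> W" using a unfolding pair_arc_def pair_vertices_def by auto
  have 3: "same_colour B W u (snd q)" using col[OF bg 2] 1 s by metis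
  show ?thesis using 1 2 3 by (cases q) auto
qed

lemma mk_SC:
  assumes "bigraph B W E" "v \<in> B \<union> W" "same_colour B W u v" "u \<noteq> v" "E u u'" "\<not> E v u'"
  shows "pair_arc B W E (u,v) (u',v)"
proof -
  have uV: "u \<in> B \<union> W" "u' \<in> B \<union> W" using E_props[OF assms(1,5)] by auto
  have "\<not> same_colour B W v u'" using col[OF assms(1,2,5)] assms(3) sc_sym by metis
  then have "u' \<noteq> v" using assms(2) unfolding same_colour_def by blast
  then show ?thesis using assms uV unfolding pair_arc_def pair_vertices_def by auto
qed

lemma mk_DC:
  assumes "bigraph B W E" "u \<in> B \<union> W" "\<not> same_colour B W u v" "\<not> E u v" "E v v'" "v' \<noteq> u"
  shows "pair_arc B W E (u,v) (u,v')"
proof -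
  have "v \<in> B \<union> W" "v' \<in> B \<union> W" using E_props[OF assms(1,5)] by auto
  moreover have "u \<noteq> v" using assms(2,3) unfolding same_colour_def by blast
  ultimately show ?thesis using assms unfolding pair_arc_def pair_vertices_def by auto
qed

lemma arc_V:
  assumes "pair_arc B W E p q"
  shows "p \<in> pair_vertices B W" "q \<in> pair_vertices B W"
  using assms unfolding pair_arc_def by auto

lemma reach_step: "pair_arc B W E a b \<Longrightarrow> pair_reach B W E b c \<Longrightarrow> pair_reach B W E a c"
  unfolding pair_reach_def by (rule converse_rtranclp_into_rtranclp)

lemma reach_trans: "pair_reach B W E a b \<Longrightarrow> pair_reach B W E b c \<Longrightarrow> pair_reach B W E a c"
  unfolding pair_reach_def by (rule rtranclp_trans)

lemma reach_refl: "pair_reach B W E a a"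
  unfolding pair_reach_def by simp

lemma S_reach:
  assumes "pair_scc B W E S" "a \<in> S" "b \<in> S"
  shows "pair_reach B W E a b"
  using assms unfolding pair_scc_def by (auto intro: reach_trans)

lemma S_mem:
  assumes "pair_scc B W E S" "a \<in> S" "pair_reach B W E a x" "pair_reach B W E x a"
  shows "x \<in> S"
  using assms unfolding pair_scc_def by (auto intro: reach_trans)

lemma scc_char:
  assumes "pair_scc B W E S" "b \<in> S"
  shows "S = {q. pair_reach B W E b q \<and> pair_reach B W E q b}"
  using S_reach[OF assms(1) assms(2)] S_reach[OF assms(1) _ assms(2)] S_mem[OF assms]
  by blast

lemma succ:
  assumes "pair_scc B W E S" "nontrivial S" "y \<in> S"
  shows "\<exists>t\<in>S. pair_arc B W E y t"
proof -
  obtain c where c: "c \<in> S" "c \<noteq> y" using assms(2,3) unfolding nontrivial_def by blast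
  have "pair_reach B W E y c" using S_reach assms c by blast
  then obtain t where t: "pair_arc B W E y t" "pair_reach B W E t c"
    using c(2) unfolding pair_reach_def by (metis converse_rtranclpE)
  have "pair_reach B W E t y" using t(2) S_reach[OF assms(1) c(1) assms(3)] reach_trans by blast
  then have "t \<in> S" using S_mem[OF assms(1) assms(3)] reach_step[OF t(1) reach_refl] by blast
  then show ?thesis using t by blast
qed

lemma pred:
  assumes "pair_scc B W E S" "nontrivial S" "y \<in> S"
  shows "\<exists>t\<in>S. pair_arc B W E t y"
proof -
  obtain c where c: "c \<in> S" "c \<noteq> y" using assms(2,3) unfolding nontrivial_def by blast
  have "pair_reach B W E c y" using S_reach assms c by blast
  then obtain t where t: "pair_arc B W E t y" "pair_reach B W E c t"
    using c(2) unfolding pair_reach_def by (metis rtranclp.cases)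
  have "pair_reach B W E y t" using t(2) S_reach[OF assms(1) assms(3) c(1)] reach_trans by blast
  moreover have "pair_reach B W E t y" using reach_step[OF t(1) reach_refl] .
  ultimately have "t \<in> S" using S_mem[OF assms(1) assms(3)] by blast
  then show ?thesis using t by blast
qed

lemma key_out:
  assumes bg: "bigraph B W E" and sc: "pair_scc B W E S" and nt: "nontrivial S"
    and yS: "y \<in> S" and yx: "pair_arc B W E y x" and xz: "pair_arc B W E x z"
  shows "x \<in> S"
proof -
  obtain u v where y: "y = (u,v)" by (cases y)
  have "pair_reach B W E x y"
  proof (cases "same_colour B W u v")
    case True
    obtain u' where x: "x = (u',v)" "E u u'" "\<not> E v u'" "\<not> same_colour B W u' v" "u \<noteq> v"
        "v \<in> B \<union> W"
      using arc_SC[OF bg yx[unfolded y] True] by blast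
    obtain t where t: "t \<in> S" "pair_arc B W E t y" using pred[OF sc nt yS] by blast
    obtain a b where tab: "t = (a,b)" by (cases t)
    have ndc: "\<not> same_colour B W a b"
    proof
      assume h: "same_colour B W a b"
      show False using arc_SC[OF bg t(2)[unfolded tab] h] True y by auto
    qed
    obtain b' where tb: "y = (a,b')" "E b b'" "\<not> E a b" "same_colour B W a b'" "b' \<noteq> a"
        "a \<in> B \<union> W"
      using arc_DC[OF bg t(2)[unfolded tab] ndc] by blast
    have a: "a = u" "b' = v" using tb(1) y by auto
    have u'V: "u' \<in> B \<union> W" "E u' u" using E_props[OF bg x(2)] by auto
    have Evb: "E v b" using E_props[OF bg tb(2)] a by auto
    have bV: "b \<in> B \<union> W" using E_props[OF bg Evb] by auto
    have "\<not> E u' v" using x(3) E_props[OF bg] by blast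
    have a1: "pair_arc B W E x (u',b)"
      unfolding x(1) using mk_DC[OF bg u'V(1) x(4) \<open>\<not> E u' v\<close> Evb] x(3) Evb by blast
    have sb: "same_colour B W u' b" using col[OF bg u'V(1) Evb] x(4) by blast
    have "\<not> E b u" using tb(3) a E_props[OF bg] by blast
    have a2: "pair_arc B W E (u',b) t"
      unfolding tab a using mk_SC[OF bg bV sb _ u'V(2) \<open>\<not> E b u\<close>] x(3) Evb by blast
    show ?thesis using reach_step[OF a1 reach_step[OF a2 reach_step[OF t(2) reach_refl]]] .
  next
    case False
    obtain v' where x: "x = (u,v')" "E v v'" "\<not> E u v" "same_colour B W u v'" "v' \<noteq> u"
        "u \<in> B \<union> W"
      using arc_DC[OF bg yx[unfolded y] False] by blast
    obtain a' where z: "z = (a',v')" "E u a'" "\<not> E v' a'" "\<not> same_colour B W a' v'" "u \<noteq> v'"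
        "v' \<in> B \<union> W"
      using arc_SC[OF bg xz[unfolded x(1)] x(4)] by blast
    have a'V: "a' \<in> B \<union> W" "E a' u" using E_props[OF bg z(2)] by auto
    have "\<not> E a' v'" using z(3) E_props[OF bg] by blast
    have Ev'v: "E v' v" using E_props[OF bg x(2)] by auto
    have vV: "v \<in> B \<union> W" using E_props[OF bg x(2)] by auto
    have "v \<noteq> a'" using z(2) x(3) by blast
    have a1: "pair_arc B W E x (a',v')"
      using xz z(1) by simp
    have a2: "pair_arc B W E (a',v') (a',v)"
      using mk_DC[OF bg a'V(1) z(4) \<open>\<not> E a' v'\<close> Ev'v \<open>v \<noteq> a'\<close>] .
    have sa: "same_colour B W a' v" using col[OF bg a'V(1) Ev'v] z(4) by blast
    have "\<not> E v u" using x(3) E_props[OF bg] by blast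
    have a3: "pair_arc B W E (a',v) (u,v)"
      using mk_SC[OF bg vV sa _ a'V(2) \<open>\<not> E v u\<close>] \<open>v \<noteq> a'\<close> by blast
    show ?thesis unfolding y using reach_step[OF a1 reach_step[OF a2 reach_step[OF a3 reach_refl]]] .
  qed
  moreover have "pair_reach B W E y x" using reach_step[OF yx reach_refl] .
  ultimately show ?thesis using S_mem[OF sc yS] by blast
qed


lemma key_in:
  assumes bg: "bigraph B W E" and sc: "pair_scc B W E S" and nt: "nontrivial S"
    and yS: "y \<in> S" and xy: "pair_arc B W E x y" and zx: "pair_arc B W E z x"
  shows "x \<in> S"
proof -
  obtain u v where y: "y = (u,v)" by (cases y)
  obtain a b where xab: "x = (a,b)" by (cases x)
  have "pair_reach B W E y x"
  proof (cases "same_colour B W u v")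
    case True
    have ndc: "\<not> same_colour B W a b"
    proof
      assume h: "same_colour B W a b"
      show False using arc_SC[OF bg xy[unfolded xab] h] True y by auto
    qed
    obtain b' where xb: "y = (a,b')" "E b b'" "\<not> E a b" "same_colour B W a b'" "b' \<noteq> a"
        "a \<in> B \<union> W"
      using arc_DC[OF bg xy[unfolded xab] ndc] by blast
    have a: "a = u" "b' = v" using xb(1) y by auto
    obtain t where t: "t \<in> S" "pair_arc B W E y t" using succ[OF sc nt yS] by blast
    obtain u' where tt: "t = (u',v)" "E u u'" "\<not> E v u'" "\<not> same_colour B W u' v" "u \<noteq> v"
        "v \<in> B \<union> W"
      using arc_SC[OF bg t(2)[unfolded y] True] by blast
    have u'V: "u' \<in> B \<union> W" "E u' u" using E_props[OF bg tt(2)] by auto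
    have Evb: "E v b" using E_props[OF bg xb(2)] a by auto
    have bV: "b \<in> B \<union> W" using E_props[OF bg Evb] by auto
    have "\<not> E u' v" using tt(3) E_props[OF bg] by blast
    have a1: "pair_arc B W E t (u',b)"
      unfolding tt(1) using mk_DC[OF bg u'V(1) tt(4) \<open>\<not> E u' v\<close> Evb] tt(3) Evb by blast
    have sb: "same_colour B W u' b" using col[OF bg u'V(1) Evb] tt(4) by blast
    have "\<not> E b u" using xb(3) a E_props[OF bg] by blast
    have a2: "pair_arc B W E (u',b) x"
      unfolding xab a using mk_SC[OF bg bV sb _ u'V(2) \<open>\<not> E b u\<close>] tt(3) Evb by blast
    show ?thesis using reach_step[OF t(2) reach_step[OF a1 reach_step[OF a2 reach_refl]]] .
  next
    case False
    have sab: "same_colour B W a b"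
    proof (rule ccontr)
      assume h: "\<not> same_colour B W a b"
      show False using arc_DC[OF bg xy[unfolded xab] h] False y by auto
    qed
    obtain a' where xa: "y = (a',b)" "E a a'" "\<not> E b a'" "\<not> same_colour B W a' b" "a \<noteq> b"
        "b \<in> B \<union> W"
      using arc_SC[OF bg xy[unfolded xab] sab] by blast
    have ab: "a' = u" "b = v" using xa(1) y by auto
    obtain c d where zcd: "z = (c,d)" by (cases z)
    have ndc: "\<not> same_colour B W c d"
    proof
      assume h: "same_colour B W c d"
      show False using arc_SC[OF bg zx[unfolded zcd] h] sab xab by auto
    qed
    obtain d' where zz: "x = (c,d')" "E d d'" "\<not> E c d" "same_colour B W c d'" "d' \<noteq> c"
        "c \<in> B \<union> W"
      using arc_DC[OF bg zx[unfolded zcd] ndc] by blast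
    have cd: "c = a" "d' = v" using zz(1) xab ab by auto
    have uV: "u \<in> B \<union> W" "E u a" using E_props[OF bg xa(2)] ab by auto
    have Evd: "E v d" using E_props[OF bg zz(2)] cd by auto
    have dV: "d \<in> B \<union> W" using E_props[OF bg Evd] by auto
    have "\<not> E u v" using xa(3) ab E_props[OF bg] by blast
    have "d \<noteq> u" using zz(3) uV(2) cd E_props[OF bg] by blast
    have a1: "pair_arc B W E (u,v) (u,d)"
      using mk_DC[OF bg uV(1) False \<open>\<not> E u v\<close> Evd \<open>d \<noteq> u\<close>] .
    have sud: "same_colour B W u d" using col[OF bg uV(1) Evd] False by blast
    have "\<not> E d a" using zz(3) cd E_props[OF bg] by blast
    have a2: "pair_arc B W E (u,d) (a,d)"
      using mk_SC[OF bg dV sud _ uV(2) \<open>\<not> E d a\<close>] \<open>d \<noteq> u\<close> by blast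
    have aV: "a \<in> B \<union> W" using zz(6) cd by simp
    have nsad: "\<not> same_colour B W a d" using col[OF bg aV Evd] sab ab by blast
    have "E d v" using E_props[OF bg Evd] by blast
    have a3: "pair_arc B W E (a,d) (a,v)"
      using mk_DC[OF bg aV nsad zz(3)[unfolded cd] \<open>E d v\<close>] xa(5) ab by blast
    show ?thesis unfolding y xab ab
      using reach_step[OF a1 reach_step[OF a2 reach_step[OF a3 reach_refl]]] by simp
  qed
  moreover have "pair_reach B W E x y" using reach_step[OF xy reach_refl] .
  ultimately show ?thesis using S_mem[OF sc yS] xab by blast
qed

lemma no_out_reach:
  assumes "\<forall>z. \<not> pair_arc B W E x z" "pair_reach B W E x q"
  shows "q = x"
  using assms(2,1) unfolding pair_reach_def by (metis converse_rtranclpE)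

lemma no_in_reach:
  assumes "\<forall>z. \<not> pair_arc B W E z x" "pair_reach B W E q x"
  shows "q = x"
  using assms(2,1) unfolding pair_reach_def by (metis rtranclp.cases)

lemma exit_arc:
  assumes "pair_reach B W E a b" "a \<in> S" "b \<notin> S"
  shows "\<exists>y x. y \<in> S \<and> x \<notin> S \<and> pair_arc B W E y x \<and> pair_reach B W E x b"
  using assms unfolding pair_reach_def
proof (induction rule: converse_rtranclp_induct)
  case base
  then show ?case by simp
next
  case (step a c)
  show ?case
  proof (cases "c \<in> S")
    case True
    then show ?thesis using step by blast
  next
    case False
    then show ?thesis using step by blast
  qed
qed

lemma out_part:
  assumes bg: "bigraph B W E" and sc: "pair_scc B W E S" and nt: "nontrivial S"
    and "y \<in> S" "x \<notin> S" "pair_arc B W E y x"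
  shows "pair_scc B W E {x} \<and> (\<forall>z. \<not> pair_arc B W E x z)"
proof -
  have no: "\<forall>z. \<not> pair_arc B W E x z" using key_out[OF bg sc nt] assms(4-6) by blast
  have "{q. pair_reach B W E x q \<and> pair_reach B W E q x} = {x}"
    using no_out_reach[OF no] reach_refl by blast
  then have "pair_scc B W E {x}" unfolding pair_scc_def using arc_V(2)[OF assms(6)] by blast
  then show ?thesis using no by blast
qed

lemma in_part:
  assumes bg: "bigraph B W E" and sc: "pair_scc B W E S" and nt: "nontrivial S"
    and "y \<in> S" "x \<notin> S" "pair_arc B W E x y"
  shows "pair_scc B W E {x} \<and> (\<forall>z. \<not> pair_arc B W E z x)"
proof -
  have no: "\<forall>z. \<not> pair_arc B W E z x" using key_in[OF bg sc nt] assms(4-6) by blast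
  have "{q. pair_reach B W E x q \<and> pair_reach B W E q x} = {x}"
    using no_in_reach[OF no] reach_refl by blast
  then have "pair_scc B W E {x}" unfolding pair_scc_def using arc_V(1)[OF assms(6)] by blast
  then show ?thesis using no by blast
qed

lemma no_path:
  assumes bg: "bigraph B W E" and sc: "pair_scc B W E S" and nt: "nontrivial S"
    and sc': "pair_scc B W E S'" and nt': "nontrivial S'" and ne: "S' \<noteq> S"
    and a: "a \<in> S" and b: "b \<in> S'" and r: "pair_reach B W E a b"
  shows False
proof -
  have "b \<notin> S"
  proof
    assume "b \<in> S"
    then have "S = S'" using scc_char[OF sc] scc_char[OF sc' b] by blast
    then show False using ne by simp
  qed
  then obtain y x where yx: "y \<in> S" "x \<notin> S" "pair_arc B W E y x" "pair_reach B W E x b"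
    using exit_arc[OF r a] by blast
  have no: "\<forall>z. \<not> pair_arc B W E x z" using out_part[OF bg sc nt yx(1-3)] by blast
  have "b = x" using no_out_reach[OF no yx(4)] .
  then obtain t where "pair_arc B W E x t" using succ[OF sc' nt' b] by blast
  then show False using no by blast
qed

theorem corollary2p7:
  fixes B W :: "'a set" and E :: "'a \<Rightarrow> 'a \<Rightarrow> bool" and S :: "('a \<times> 'a) set"
  assumes "bigraph B W E"
    and "pair_scc B W E S" and "nontrivial S"
  shows "(\<forall>y x. y \<in> S \<and> x \<notin> S \<and> pair_arc B W E y x \<longrightarrow>
            pair_scc B W E {x} \<and> (\<forall>z. \<not> pair_arc B W E x z))
       \<and> (\<forall>y x. y \<in> S \<and> x \<notin> S \<and> pair_arc B W E x y \<longrightarrow>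
            pair_scc B W E {x} \<and> (\<forall>z. \<not> pair_arc B W E z x))
       \<and> (\<forall>S'. pair_scc B W E S' \<and> nontrivial S' \<and> S' \<noteq> S \<longrightarrow>
            (\<forall>a \<in> S. \<forall>b \<in> S'. \<not> pair_reach B W E a b \<and> \<not> pair_reach B W E b a))"
proof -
  have 1: "\<forall>y x. y \<in> S \<and> x \<notin> S \<and> pair_arc B W E y x \<longrightarrow>
            pair_scc B W E {x} \<and> (\<forall>z. \<not> pair_arc B W E x z)"
    using out_part[OF assms] by blast
  have 2: "\<forall>y x. y \<in> S \<and> x \<notin> S \<and> pair_arc B W E x y \<longrightarrow>
            pair_scc B W E {x} \<and> (\<forall>z. \<not> pair_arc B W E z x)"
    using in_part[OF assms] by blast
  have 3: "\<forall>S'. pair_scc B W E S' \<and> nontrivial S' \<and> S' \<noteq> S \<longrightarrow>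
            (\<forall>a \<in> S. \<forall>b \<in> S'. \<not> pair_reach B W E a b \<and> \<not> pair_reach B W E b a)"
  proof (intro allI impI ballI)
    fix S' a b assume h: "pair_scc B W E S' \<and> nontrivial S' \<and> S' \<noteq> S" "a \<in> S" "b \<in> S'"
    show "\<not> pair_reach B W E a b \<and> \<not> pair_reach B W E b a"
      using no_path[OF assms, of S' a b] no_path[OF assms(1) _ _ assms(2,3), of S' b a] h by blast
  qed
  show ?thesis using 1 2 3 by blast
qed

end
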